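(* (i) Let $I$ be any instance with $n$ agents and goods partitioned into categories $C_1,\dots,C_h$ with $m_j=|C_j|$ and cardinality constraints $\kappa=(k_1,\dots,k_h)$, $k_j\ge m_j/n$, ordered so that $\frac{k_1}{m_1}\le\dots\le\frac{k_h}{m_h}$, and with $k_1\le m_1$. Then $$\frac{\text{OPT-USW}(I)}{\max_{\mathcal{A}\in \mathcal{C}_\kappa(I)}\text{USW}(\mathcal{A})}\le\frac{m_1}{k_1}.$$ (ii) For all positive integers $n,k,q$ with $k\mid q$ and $q\le kn$, there is an instance with $n$ agents and $h=n$ categories, each with $m_j=q$ goods and constraint $k_j=k$, for which this ratio equals $\frac{q}{k}=\frac{m_1}{k_1}$.
   Context: Each agent $i$ has an additive utility function $u_i:2^M\to\mathbb{R}_{\ge 0}$ with $u_i(\emptyset)=0$ and $u_i(M)=1$, where $M=C_1\cup\dots\cup C_h$ is the set of goods. An allocation $(A_1,\dots,A_n)$ is a partition of $M$; it is cardinal if $|A_i\cap C_j|\le k_j$ for all $i,j$; $\mathcal{C}_\kappa(I)$ is the set of cardinal allocations. $\text{USW}(\mathcal{A})=\sum_i u_i(A_i)$ and $\text{OPT-USW}(I)$ is its maximum over all allocations. *)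

theory Defs
  imports Complex_Main
begin

text \<open>Agents are 0..n-1, categories are C 0, ..., C (h-1) (so the paper's C_1 is C 0),
goods form a finite set M of some type 'g. u i g is agent i's value for good g;
utilities are additive.\<close>

definition valid_instance ::
  "nat \<Rightarrow> nat \<Rightarrow> 'g set \<Rightarrow> (nat \<Rightarrow> 'g set) \<Rightarrow> (nat \<Rightarrow> 'g \<Rightarrow> real) \<Rightarrow> bool" where
  "valid_instance n h M C u \<longleftrightarrow>
     0 < n \<and> finite M \<and>
     (\<forall>j<h. C j \<noteq> {} \<and> C j \<subseteq> M) \<and>
     (\<forall>j<h. \<forall>j'<h. j \<noteq> j' \<longrightarrow> C j \<inter> C j' = {}) \<and>
     (\<Union>j<h. C j) = M \<and>
     (\<forall>i<n. (\<forall>g\<in>M. 0 \<le> u i g) \<and> (\<Sum>g\<in>M. u i g) = 1)"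

definition util :: "(nat \<Rightarrow> 'g \<Rightarrow> real) \<Rightarrow> nat \<Rightarrow> 'g set \<Rightarrow> real" where
  "util u i S = (\<Sum>g\<in>S. u i g)"

definition is_allocation :: "nat \<Rightarrow> 'g set \<Rightarrow> (nat \<Rightarrow> 'g set) \<Rightarrow> bool" where
  "is_allocation n M A \<longleftrightarrow>
     (\<forall>i<n. A i \<subseteq> M) \<and>
     (\<forall>i<n. \<forall>i'<n. i \<noteq> i' \<longrightarrow> A i \<inter> A i' = {}) \<and>
     (\<Union>i<n. A i) = M"

definition is_cardinal :: "nat \<Rightarrow> nat \<Rightarrow> (nat \<Rightarrow> 'g set) \<Rightarrow> (nat \<Rightarrow> nat) \<Rightarrow> (nat \<Rightarrow> 'g set) \<Rightarrow> bool" where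
  "is_cardinal n h C k A \<longleftrightarrow> (\<forall>i<n. \<forall>j<h. card (A i \<inter> C j) \<le> k j)"

definition usw :: "nat \<Rightarrow> (nat \<Rightarrow> 'g \<Rightarrow> real) \<Rightarrow> (nat \<Rightarrow> 'g set) \<Rightarrow> real" where
  "usw n u A = (\<Sum>i<n. util u i (A i))"

definition opt_usw :: "nat \<Rightarrow> 'g set \<Rightarrow> (nat \<Rightarrow> 'g \<Rightarrow> real) \<Rightarrow> real" where
  "opt_usw n M u = Sup {usw n u A | A. is_allocation n M A}"

definition max_cardinal_usw ::
  "nat \<Rightarrow> nat \<Rightarrow> 'g set \<Rightarrow> (nat \<Rightarrow> 'g set) \<Rightarrow> (nat \<Rightarrow> nat) \<Rightarrow> (nat \<Rightarrow> 'g \<Rightarrow> real) \<Rightarrow> real" where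
  "max_cardinal_usw n h M C k u =
     Sup {usw n u A | A. is_allocation n M A \<and> is_cardinal n h C k A}"

end

theory Submission
  imports Defs
begin

lemma subset_frac:
  fixes f :: "'g \<Rightarrow> real"
  assumes "finite S" "\<forall>x\<in>S. 0 \<le> f x" "card S = t + d"
  shows "\<exists>T\<subseteq>S. card T = t \<and> real t * sum f S \<le> real (card S) * sum f T"
  using assms
proof (induction d arbitrary: S)
  case 0
  then show ?case by auto
next
  case (Suc d)
  then have ne: "S \<noteq> {}" by auto
  have finI: "finite (f ` S)" using Suc.prems(1) by simp
  have neI: "f ` S \<noteq> {}" using ne by simp
  have "Min (f ` S) \<in> f ` S" using Min_in[OF finI neI] .
  then obtain x where x1: "x \<in> S" and fx: "f x = Min (f ` S)" by (auto simp: image_iff)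
  have x2: "\<forall>y\<in>S. f x \<le> f y" using fx Min_le[OF finI] by simp
  note x = x1 x2
  define S' where "S' = S - {x}"
  have cS': "card S' = t + d" using Suc.prems x(1) unfolding S'_def by simp
  have fS': "finite S'" using Suc.prems(1) S'_def by simp
  obtain T where T: "T \<subseteq> S'" "card T = t" "real t * sum f S' \<le> real (card S') * sum f T"
    using Suc.IH[OF fS' _ cS'] Suc.prems(2) S'_def by auto
  have sS: "sum f S = sum f S' + f x"
    using Suc.prems(1) x(1) S'_def by (simp add: sum.remove)
  have lb: "real (card S') * f x \<le> sum f S'"
    using sum_bounded_below[of S' "f x" f] x S'_def by auto
  have sT0: "0 \<le> sum f T" using T(1) Suc.prems(2) S'_def by (intro sum_nonneg) auto
  have "real t * sum f S \<le> real (card S) * sum f T"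
  proof (cases "card S' = 0")
    case True
    then have "t = 0" using cS' by simp
    then show ?thesis using sT0 by simp
  next
    case False
    then have cpos: "real (card S') > 0" by simp
    have "real (card S') * (real t * f x) \<le> real (card S') * sum f T"
    proof -
      have "real t * (real (card S') * f x) \<le> real t * sum f S'"
        using lb by (intro mult_left_mono) auto
      then show ?thesis using T(3) by (simp add: algebra_simps)
    qed
    then have "real t * f x \<le> sum f T" using cpos by simp
    moreover have "card S = card S' + 1" using Suc.prems(3) cS' by simp
    ultimately show ?thesis using T(3) sS by (simp add: algebra_simps)
  qed
  then show ?case using T S'_def by (intro exI[of _ T]) blast
qed

lemma pick:
  fixes f :: "'g \<Rightarrow> real"
  assumes "finite S" "\<forall>x\<in>S. 0 \<le> f x" "0 \<le> r" "r \<le> 1" "r * real (card S) \<le> real k"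
  shows "\<exists>T\<subseteq>S. card T \<le> k \<and> r * sum f S \<le> sum f T"
proof (cases "card S \<le> k")
  case True
  have "0 \<le> sum f S" using assms(2) by (intro sum_nonneg) auto
  then have "r * sum f S \<le> sum f S" using mult_right_mono[of r 1 "sum f S"] assms(4) by simp
  then show ?thesis using True by (intro exI[of _ S]) simp
next
  case False
  define d where "d = card S - k"
  have d: "card S = k + d" using False d_def by simp
  obtain T where T: "T \<subseteq> S" "card T = k" "real k * sum f S \<le> real (card S) * sum f T"
    using subset_frac[OF assms(1,2) d] by blast
  have s0: "0 \<le> sum f S" using assms(2) by (intro sum_nonneg) auto
  have cpos: "real (card S) > 0" using False by simp
  have "real (card S) * (r * sum f S) \<le> real k * sum f S"
    using mult_right_mono[OF assms(5) s0] by (simp add: algebra_simps)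
  also have "\<dots> \<le> real (card S) * sum f T" by (rule T(3))
  finally have "r * sum f S \<le> sum f T" using cpos by simp
  then show ?thesis using T by auto
qed

lemma fill:
  assumes "finite C" "card C \<le> n * k" "\<forall>i<n. T i \<subseteq> C \<and> card (T i) \<le> k"
    "\<forall>i<n. \<forall>i'<n. i \<noteq> i' \<longrightarrow> T i \<inter> T i' = {}"
    "card (C - (\<Union>i<n. T i)) = d"
  shows "\<exists>B. (\<forall>i<n. T i \<subseteq> B i \<and> B i \<subseteq> C \<and> card (B i) \<le> k) \<and>
             (\<forall>i<n. \<forall>i'<n. i \<noteq> i' \<longrightarrow> B i \<inter> B i' = {}) \<and> (\<Union>i<n. B i) = C"
  using assms(3-5)
proof (induction d arbitrary: T)
  case 0
  have "C - (\<Union>i<n. T i) = {}" using 0 assms(1) by simp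
  then have "(\<Union>i<n. T i) = C" using "0.prems"(1) by blast
  then show ?case using "0.prems" by (intro exI[of _ T]) auto
next
  case (Suc d)
  have "C - (\<Union>i<n. T i) \<noteq> {}" using Suc.prems(3) by (intro notI) simp
  then obtain g where g: "g \<in> C" "g \<notin> (\<Union>i<n. T i)" by blast
  have fin: "\<forall>i<n. finite (T i)" using Suc.prems(1) assms(1) finite_subset by blast
  have "\<exists>i0<n. card (T i0) < k"
  proof (rule ccontr)
    assume nc: "\<not> ?thesis"
    have ck: "\<forall>i<n. card (T i) = k"
    proof (intro allI impI)
      fix i assume i: "i < n"
      have "\<not> card (T i) < k" using nc i by blast
      then have "k \<le> card (T i)" by simp
      moreover have "card (T i) \<le> k" using Suc.prems(1) i by blast
      ultimately show "card (T i) = k" by simp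
    qed
    have "card (\<Union>i<n. T i) = (\<Sum>i<n. card (T i))"
      using fin Suc.prems(2) by (intro card_UN_disjoint) auto
    also have "\<dots> = n * k" using ck by simp
    finally have e: "card (\<Union>i<n. T i) = n * k" .
    have "(\<Union>i<n. T i) \<subset> C" using g Suc.prems(1) by blast
    then have "card (\<Union>i<n. T i) < card C" by (rule psubset_card_mono[OF assms(1)])
    then show False using e assms(2) by simp
  qed
  then obtain i0 where i0: "i0 < n" "card (T i0) < k" by blast
  define T' where "T' = T(i0 := insert g (T i0))"
  have p1: "\<forall>i<n. T' i \<subseteq> C \<and> card (T' i) \<le> k"
    using Suc.prems(1) i0 g fin unfolding T'_def by (auto simp: card_insert_if)
  have p2: "\<forall>i<n. \<forall>i'<n. i \<noteq> i' \<longrightarrow> T' i \<inter> T' i' = {}"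
    using Suc.prems(2) g unfolding T'_def by auto
  have U: "(\<Union>i<n. T' i) = insert g (\<Union>i<n. T i)"
    using i0 unfolding T'_def by auto
  have "C - (\<Union>i<n. T' i) = (C - (\<Union>i<n. T i)) - {g}" using U by auto
  then have p3: "card (C - (\<Union>i<n. T' i)) = d" using Suc.prems(3) g assms(1) by simp
  obtain B where B: "\<forall>i<n. T' i \<subseteq> B i \<and> B i \<subseteq> C \<and> card (B i) \<le> k"
      "\<forall>i<n. \<forall>i'<n. i \<noteq> i' \<longrightarrow> B i \<inter> B i' = {}" "(\<Union>i<n. B i) = C"
    using Suc.IH[OF p1 p2 p3] by blast
  have "\<forall>i. T i \<subseteq> T' i" unfolding T'_def by auto
  then have "\<forall>i<n. T i \<subseteq> B i" using B(1) by blast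
  then show ?case using B by (intro exI[of _ B]) blast
qed


lemma split_sum:
  fixes f :: "'g \<Rightarrow> real" and h :: nat
  assumes "finite M" "\<forall>j<h. C j \<subseteq> M" "\<forall>j<h. \<forall>j'<h. j \<noteq> j' \<longrightarrow> C j \<inter> C j' = {}"
    "(\<Union>j<h. C j) = M" "S \<subseteq> M"
  shows "sum f S = (\<Sum>j<h. sum f (S \<inter> C j))"
proof -
  have "S = (\<Union>j<h. S \<inter> C j)" using assms(4,5) by blast
  then have "sum f S = sum f (\<Union>j<h. S \<inter> C j)" by simp
  also have "\<dots> = (\<Sum>j<h. sum f (S \<inter> C j))"
  proof (rule sum.UNION_disjoint)
    show "finite {..<h}" by simp
    show "\<forall>j\<in>{..<h}. finite (S \<inter> C j)" using assms(1,5) finite_subset by blast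
    show "\<forall>j\<in>{..<h}. \<forall>j'\<in>{..<h}. j \<noteq> j' \<longrightarrow> S \<inter> C j \<inter> (S \<inter> C j') = {}"
      using assms(3) by auto
  qed
  finally show ?thesis .
qed

lemma cardinal_approx:
  assumes vi: "valid_instance n h M C u"
    and r0: "0 \<le> r" and r1: "r \<le> 1"
    and rk: "\<forall>j<h. r * real (card (C j)) \<le> real (k j)"
    and nk: "\<forall>j<h. card (C j) \<le> n * k j"
    and A: "is_allocation n M A"
  shows "\<exists>B. is_allocation n M B \<and> is_cardinal n h C k B \<and> r * usw n u A \<le> usw n u B"
proof -
  have finM: "finite M" and CM: "\<forall>j<h. C j \<subseteq> M"
    and Cd: "\<forall>j<h. \<forall>j'<h. j \<noteq> j' \<longrightarrow> C j \<inter> C j' = {}"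
    and CU: "(\<Union>j<h. C j) = M" and u0: "\<forall>i<n. \<forall>g\<in>M. 0 \<le> u i g"
    using vi unfolding valid_instance_def by auto
  have AM: "\<forall>i<n. A i \<subseteq> M" and Ad: "\<forall>i<n. \<forall>i'<n. i \<noteq> i' \<longrightarrow> A i \<inter> A i' = {}"
    and AU: "(\<Union>i<n. A i) = M"
    using A unfolding is_allocation_def by auto
  have percat: "\<exists>Bj. (\<forall>i<n. Bj i \<subseteq> C j \<and> card (Bj i) \<le> k j) \<and>
             (\<forall>i<n. \<forall>i'<n. i \<noteq> i' \<longrightarrow> Bj i \<inter> Bj i' = {}) \<and> (\<Union>i<n. Bj i) = C j \<and>
             (\<forall>i<n. r * util u i (A i \<inter> C j) \<le> util u i (Bj i))" if j: "j < h" for j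
  proof -
    have finC: "finite (C j)" using finM CM j finite_subset by blast
    have "\<forall>i. \<exists>T. i < n \<longrightarrow> T \<subseteq> A i \<inter> C j \<and> card T \<le> k j \<and>
             r * sum (u i) (A i \<inter> C j) \<le> sum (u i) T"
    proof (intro allI impI)
      fix i
      show "\<exists>T. i < n \<longrightarrow> T \<subseteq> A i \<inter> C j \<and> card T \<le> k j \<and> r * sum (u i) (A i \<inter> C j) \<le> sum (u i) T"
      proof (cases "i < n")
        case True
        have fin: "finite (A i \<inter> C j)" using finC by simp
        have nn: "\<forall>x\<in>A i \<inter> C j. 0 \<le> u i x" using u0 True AM by blast
        have "card (A i \<inter> C j) \<le> card (C j)" using finC by (simp add: card_mono)
        then have "r * real (card (A i \<inter> C j)) \<le> r * real (card (C j))"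
          using r0 by (intro mult_left_mono) auto
        then have "r * real (card (A i \<inter> C j)) \<le> real (k j)" using rk j by force
        from pick[OF fin nn r0 r1 this] show ?thesis by blast
      qed auto
    qed
    from choice[OF this] obtain T where T: "\<forall>i<n. T i \<subseteq> A i \<inter> C j \<and> card (T i) \<le> k j \<and>
             r * sum (u i) (A i \<inter> C j) \<le> sum (u i) (T i)"
      by blast
    have T1: "\<forall>i<n. T i \<subseteq> C j \<and> card (T i) \<le> k j" using T by blast
    have T2: "\<forall>i<n. \<forall>i'<n. i \<noteq> i' \<longrightarrow> T i \<inter> T i' = {}" using T Ad by blast
    obtain Bj where Bj: "\<forall>i<n. T i \<subseteq> Bj i \<and> Bj i \<subseteq> C j \<and> card (Bj i) \<le> k j"
      "\<forall>i<n. \<forall>i'<n. i \<noteq> i' \<longrightarrow> Bj i \<inter> Bj i' = {}" "(\<Union>i<n. Bj i) = C j"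
      using fill[OF finC _ T1 T2 refl] nk j by blast
    have "\<forall>i<n. r * util u i (A i \<inter> C j) \<le> util u i (Bj i)"
    proof (intro allI impI)
      fix i assume i: "i < n"
      have "sum (u i) (T i) \<le> sum (u i) (Bj i)"
      proof (rule sum_mono2)
        show "finite (Bj i)" using Bj(1) i finC finite_subset by blast
        show "T i \<subseteq> Bj i" using Bj(1) i by blast
        show "\<And>b. b \<in> Bj i - T i \<Longrightarrow> 0 \<le> u i b" using Bj(1) i CM j u0 by blast
      qed
      then show "r * util u i (A i \<inter> C j) \<le> util u i (Bj i)"
        using T i unfolding util_def by force
    qed
    then show ?thesis using Bj by (intro exI[of _ Bj]) blast
  qed
  define P where "P = (\<lambda>j Bj. (\<forall>i<n. Bj i \<subseteq> C j \<and> card (Bj i) \<le> k j) \<and>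
             (\<forall>i<n. \<forall>i'<n. i \<noteq> i' \<longrightarrow> Bj i \<inter> Bj i' = {}) \<and> (\<Union>i<n. Bj i) = C j \<and>
             (\<forall>i<n. r * util u i (A i \<inter> C j) \<le> util u i (Bj i)))"
  have "\<forall>j. \<exists>Bj. j < h \<longrightarrow> P j Bj"
  proof
    fix j
    show "\<exists>Bj. j < h \<longrightarrow> P j Bj"
    proof (cases "j < h")
      case True
      have "\<exists>Bj. P j Bj" using percat[OF True] unfolding P_def by simp
      then obtain Bj where "P j Bj" ..
      then show ?thesis by (intro exI[of _ Bj]) simp
    qed simp
  qed
  from choice[OF this] obtain BB where BB: "\<And>j. j < h \<Longrightarrow> P j (BB j)"
    by blast
  have BB1: "BB j i \<subseteq> C j" if "j < h" "i < n" for j i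
    using BB[OF that(1)] that(2) unfolding P_def by simp
  have BB2: "card (BB j i) \<le> k j" if "j < h" "i < n" for j i
    using BB[OF that(1)] that(2) unfolding P_def by simp
  have BB3: "BB j i \<inter> BB j i' = {}" if "j < h" "i < n" "i' < n" "i \<noteq> i'" for j i i'
    using BB[OF that(1)] that(2-4) unfolding P_def by simp
  have BB4: "(\<Union>i<n. BB j i) = C j" if "j < h" for j
    using BB[OF that(1)] unfolding P_def by simp
  have BB5: "r * util u i (A i \<inter> C j) \<le> util u i (BB j i)" if "j < h" "i < n" for j i
    using BB[OF that(1)] that(2) unfolding P_def by simp
  define B where "B i = (\<Union>j<h. BB j i)" for i
  have BM: "\<forall>i<n. B i \<subseteq> M" using BB1 CM unfolding B_def by blast
  have BC: "B i \<inter> C j = BB j i" if "i < n" "j < h" for i j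
  proof
    show "B i \<inter> C j \<subseteq> BB j i"
    proof
      fix x assume "x \<in> B i \<inter> C j"
      then obtain j' where j': "j' < h" "x \<in> BB j' i" "x \<in> C j" unfolding B_def by blast
      then have "x \<in> C j'" using BB1 that by blast
      then have "j' = j" using Cd j' that by blast
      then show "x \<in> BB j i" using j' by simp
    qed
    show "BB j i \<subseteq> B i \<inter> C j" using BB1[OF that(2,1)] that unfolding B_def by blast
  qed
  have alloc: "is_allocation n M B"
    unfolding is_allocation_def
  proof (intro conjI)
    show "\<forall>i<n. B i \<subseteq> M" by (rule BM)
    show "\<forall>i<n. \<forall>i'<n. i \<noteq> i' \<longrightarrow> B i \<inter> B i' = {}"
    proof (intro allI impI)
      fix i i' assume ii: "i < n" "i' < n" "i \<noteq> i'"
      show "B i \<inter> B i' = {}"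
      proof (rule ccontr)
        assume "B i \<inter> B i' \<noteq> {}"
        then obtain x j j' where x: "j < h" "j' < h" "x \<in> BB j i" "x \<in> BB j' i'"
          unfolding B_def by blast
        then have "x \<in> C j" "x \<in> C j'" using BB1 ii by blast+
        then have "j = j'" using Cd x by blast
        then show False using BB3[of j i i'] x ii by blast
      qed
    qed
    show "(\<Union>i<n. B i) = M"
    proof -
      have "(\<Union>i<n. B i) = (\<Union>j<h. \<Union>i<n. BB j i)" unfolding B_def by blast
      also have "\<dots> = (\<Union>j<h. C j)" using BB4 by simp
      finally show ?thesis using CU by simp
    qed
  qed
  have card: "is_cardinal n h C k B"
    unfolding is_cardinal_def using BC BB2 by simp
  have "r * usw n u A = (\<Sum>i<n. \<Sum>j<h. r * util u i (A i \<inter> C j))"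
  proof -
    have "\<forall>i<n. util u i (A i) = (\<Sum>j<h. util u i (A i \<inter> C j))"
    proof (intro allI impI)
      fix i assume i: "i < n"
      show "util u i (A i) = (\<Sum>j<h. util u i (A i \<inter> C j))"
        unfolding util_def by (rule split_sum[OF finM CM Cd CU]) (use AM i in blast)
    qed
    then show ?thesis unfolding usw_def by (simp add: sum_distrib_left)
  qed
  also have "\<dots> \<le> (\<Sum>i<n. \<Sum>j<h. util u i (BB j i))"
    using BB5 by (intro sum_mono) auto
  also have "\<dots> = usw n u B"
  proof -
    have "\<forall>i<n. util u i (B i) = (\<Sum>j<h. util u i (BB j i))"
    proof (intro allI impI)
      fix i assume i: "i < n"
      have "util u i (B i) = (\<Sum>j<h. util u i (B i \<inter> C j))"
        unfolding util_def by (rule split_sum[OF finM CM Cd CU]) (use BM i in blast)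
      also have "\<dots> = (\<Sum>j<h. util u i (BB j i))"
        using BC[OF i] by (intro sum.cong) auto
      finally show "util u i (B i) = (\<Sum>j<h. util u i (BB j i))" .
    qed
    then show ?thesis unfolding usw_def by simp
  qed
  finally show ?thesis using alloc card by (intro exI[of _ B]) blast
qed

lemma usw_bounds:
  assumes "valid_instance n h M C u" "is_allocation n M A"
  shows "0 \<le> usw n u A \<and> usw n u A \<le> real n"
proof -
  have finM: "finite M" and u0: "\<forall>i<n. \<forall>g\<in>M. 0 \<le> u i g" and u1: "\<forall>i<n. sum (u i) M = 1"
    using assms(1) unfolding valid_instance_def by auto
  have AM: "\<forall>i<n. A i \<subseteq> M" using assms(2) unfolding is_allocation_def by auto
  have "\<forall>i<n. 0 \<le> util u i (A i) \<and> util u i (A i) \<le> 1"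
  proof (intro allI impI conjI)
    fix i assume i: "i < n"
    show "0 \<le> util u i (A i)" unfolding util_def using AM u0 i by (intro sum_nonneg) blast
    have "sum (u i) (A i) \<le> sum (u i) M"
      using AM u0 i finM by (intro sum_mono2) auto
    then show "util u i (A i) \<le> 1" unfolding util_def using u1 i by simp
  qed
  then show ?thesis unfolding usw_def
    using sum_nonneg[of "{..<n}" "\<lambda>i. util u i (A i)"] sum_mono[of "{..<n}" "\<lambda>i. util u i (A i)" "\<lambda>_. 1"]
    by auto
qed


lemma part1:
  assumes vi: "valid_instance n h M C u" and h0: "0 < h"
    and H1: "\<forall>j<h. real (card (C j)) / real n \<le> real (k j)"
    and H2: "\<forall>j<h. \<forall>j'<h. j \<le> j' \<longrightarrow>
                real (k j) / real (card (C j)) \<le> real (k j') / real (card (C j'))"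
    and H3: "k 0 \<le> card (C 0)"
  shows "opt_usw n M u / max_cardinal_usw n h M C k u \<le> real (card (C 0)) / real (k 0)"
proof -
  have n0: "0 < n" and finM: "finite M" and CM: "\<forall>j<h. C j \<subseteq> M \<and> C j \<noteq> {}"
    using vi unfolding valid_instance_def by auto
  have cpos: "0 < card (C j)" if "j < h" for j
    using CM finM that by (metis card_gt_0_iff finite_subset)
  have nk: "\<forall>j<h. card (C j) \<le> n * k j"
  proof (intro allI impI)
    fix j assume j: "j < h"
    have "real (card (C j)) \<le> real (k j) * real n" using H1 j n0 by (simp add: divide_le_eq)
    then have "real (card (C j)) \<le> real (n * k j)" by (simp add: mult.commute)
    then show "card (C j) \<le> n * k j" by linarith
  qed
  define m0 where "m0 = card (C 0)"
  have m0: "0 < m0" using cpos h0 m0_def by blast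
  have k0: "0 < k 0"
  proof (rule ccontr)
    assume "\<not> 0 < k 0"
    then have "k 0 = 0" by simp
    then show False using nk h0 m0 m0_def by force
  qed
  define r where "r = real (k 0) / real m0"
  have r0: "0 < r" using k0 m0 r_def by simp
  have r1: "r \<le> 1" using H3 m0 r_def m0_def by simp
  have rk: "\<forall>j<h. r * real (card (C j)) \<le> real (k j)"
  proof (intro allI impI)
    fix j assume j: "j < h"
    have "r \<le> real (k j) / real (card (C j))" using H2 h0 j r_def m0_def by auto
    then show "r * real (card (C j)) \<le> real (k j)" using cpos[OF j] by (simp add: le_divide_eq)
  qed
  define X where "X = {usw n u A | A. is_allocation n M A}"
  define Y where "Y = {usw n u A | A. is_allocation n M A \<and> is_cardinal n h C k A}"
  have bY: "bdd_above Y" unfolding Y_def bdd_above_def using usw_bounds[OF vi] by blast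
  define A0 where "A0 = (\<lambda>i::nat. if i = 0 then M else {})"
  have A0: "is_allocation n M A0" unfolding is_allocation_def A0_def using n0 by auto
  have key: "r * usw n u A \<le> Sup Y" if A: "is_allocation n M A" for A
  proof -
    obtain B where B: "is_allocation n M B" "is_cardinal n h C k B" "r * usw n u A \<le> usw n u B"
      using cardinal_approx[OF vi _ r1 rk nk A] r0 by auto
    have "usw n u B \<in> Y" unfolding Y_def using B by blast
    then have "usw n u B \<le> Sup Y" using bY by (rule cSup_upper)
    then show ?thesis using B by simp
  qed
  have MC0: "0 \<le> Sup Y"
    using key[OF A0] usw_bounds[OF vi A0] r0 by (smt (verit) mult_nonneg_nonneg)
  have "Sup X \<le> Sup Y / r"
  proof (rule cSup_least)
    show "X \<noteq> {}" unfolding X_def using A0 by blast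
    fix x assume "x \<in> X"
    then obtain A where "is_allocation n M A" "x = usw n u A" unfolding X_def by blast
    then show "x \<le> Sup Y / r" using key r0 by (simp add: le_divide_eq mult.commute)
  qed
  then have opt: "opt_usw n M u \<le> Sup Y / r" unfolding opt_usw_def X_def by simp
  have mc: "max_cardinal_usw n h M C k u = Sup Y" unfolding max_cardinal_usw_def Y_def by simp
  show ?thesis
  proof (cases "Sup Y = 0")
    case True
    then show ?thesis using mc by simp
  next
    case False
    then have p: "0 < Sup Y" using MC0 by simp
    have "opt_usw n M u / Sup Y \<le> (Sup Y / r) / Sup Y" using divide_right_mono[OF opt, of "Sup Y"] p by simp
    also have "\<dots> = 1 / r" using p by simp
    also have "\<dots> = real (card (C 0)) / real (k 0)" using r_def m0_def by simp
    finally show ?thesis using mc by simp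
  qed
qed

lemma Cdiv:
  assumes "0 < (q::nat)"
  shows "(j * q \<le> x \<and> x < j * q + q) \<longleftrightarrow> x div q = j"
proof
  assume "j * q \<le> x \<and> x < j * q + q"
  then show "x div q = j" using assms by (intro div_nat_eqI) (auto simp: mult.commute)
next
  assume "x div q = j"
  then show "j * q \<le> x \<and> x < j * q + q" using assms
    by (metis add.commute div_mult_mod_eq le_add2 mod_less_divisor nat_add_left_cancel_less)
qed

lemma part2:
  assumes "0 < n" "0 < k" "0 < q" "k dvd q" "q \<le> k * n"
  shows "\<exists>(M::nat set) C u.
               valid_instance n n M C u \<and> (\<forall>j<n. card (C j) = q) \<and>
               opt_usw n M u / max_cardinal_usw n n M C (\<lambda>_. k) u = real q / real k"
proof -
  define M where "M = {..<n*q}"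
  define C where "C j = {j*q..<j*q+q}" for j
  define u where "u i g = (if g \<in> C i then 1 / real q else 0)" for i g
  have Cd: "x \<in> C j \<longleftrightarrow> x div q = j" for x j
    unfolding C_def using Cdiv[OF assms(3)] by auto
  have cC: "card (C j) = q" for j unfolding C_def by simp
  have kq: "k \<le> q" using assms(3,4) by (simp add: dvd_imp_le)
  have su: "util u i S = real (card (S \<inter> C i)) / real q" if "finite S" for i S
  proof -
    have "util u i S = sum (\<lambda>_. 1 / real q) (S \<inter> C i)"
      unfolding util_def u_def using sum.inter_restrict[OF that, of "\<lambda>_. 1 / real q" "C i"]
      by simp
    then show ?thesis by simp
  qed
  have CM: "C j \<subseteq> M" if "j < n" for j
  proof
    fix x assume "x \<in> C j"
    then have "x < j * q + q" unfolding C_def by simp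
    also have "j * q + q = Suc j * q" by simp
    also have "\<dots> \<le> n * q" using that by (intro mult_le_mono1) simp
    finally show "x \<in> M" unfolding M_def by simp
  qed
  have CU: "(\<Union>j<n. C j) = M"
  proof
    show "(\<Union>j<n. C j) \<subseteq> M" using CM by blast
    show "M \<subseteq> (\<Union>j<n. C j)"
    proof
      fix x assume "x \<in> M"
      then have "x div q < n" unfolding M_def using assms(3) by (simp add: div_less_iff_less_mult)
      then show "x \<in> (\<Union>j<n. C j)" using Cd by blast
    qed
  qed
  have vi: "valid_instance n n M C u"
    unfolding valid_instance_def
  proof (intro conjI)
    show "0 < n" by (rule assms(1))
    show "finite M" unfolding M_def by simp
    show "\<forall>j<n. C j \<noteq> {} \<and> C j \<subseteq> M" using CM cC assms(3) by (metis card.empty less_not_refl)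
    show "\<forall>j<n. \<forall>j'<n. j \<noteq> j' \<longrightarrow> C j \<inter> C j' = {}" by (auto simp: Cd)
    show "(\<Union>j<n. C j) = M" by (rule CU)
    show "\<forall>i<n. (\<forall>g\<in>M. 0 \<le> u i g) \<and> (\<Sum>g\<in>M. u i g) = 1"
    proof (intro allI impI conjI)
      fix i assume i: "i < n"
      show "\<forall>g\<in>M. 0 \<le> u i g" unfolding u_def by simp
      have "(\<Sum>g\<in>M. u i g) = util u i M" unfolding util_def by simp
      also have "\<dots> = real (card (M \<inter> C i)) / real q" using su M_def by simp
      also have "M \<inter> C i = C i" using CM i by blast
      finally show "(\<Sum>g\<in>M. u i g) = 1" using cC assms(3) by simp
    qed
  qed
  have allocC: "is_allocation n M C"
    using vi unfolding valid_instance_def is_allocation_def by auto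
  have uswC: "usw n u C = real n"
  proof -
    have "\<forall>i<n. util u i (C i) = 1" using su cC assms(3) unfolding C_def by simp
    then show ?thesis unfolding usw_def by simp
  qed
  define X where "X = {usw n u A | A. is_allocation n M A}"
  define Y where "Y = {usw n u A | A. is_allocation n M A \<and> is_cardinal n n C (\<lambda>_. k) A}"
  have bX: "bdd_above X" unfolding X_def bdd_above_def using usw_bounds[OF vi] by blast
  have bY: "bdd_above Y" unfolding Y_def bdd_above_def using usw_bounds[OF vi] by blast
  have opt: "opt_usw n M u = real n"
  proof (rule antisym)
    have "Sup X \<le> real n"
    proof (rule cSup_least)
      show "X \<noteq> {}" unfolding X_def using allocC by blast
      show "\<And>x. x \<in> X \<Longrightarrow> x \<le> real n" unfolding X_def using usw_bounds[OF vi] by blast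
    qed
    then show "opt_usw n M u \<le> real n" unfolding opt_usw_def X_def by simp
    have "usw n u C \<in> X" unfolding X_def using allocC by blast
    then have "usw n u C \<le> Sup X" using bX by (rule cSup_upper)
    then show "real n \<le> opt_usw n M u" unfolding opt_usw_def X_def using uswC by simp
  qed
  define r where "r = real k / real q"
  have r0: "0 \<le> r" and r1: "r \<le> 1" using kq assms(3) r_def by auto
  have mc: "max_cardinal_usw n n M C (\<lambda>_. k) u = r * real n"
  proof (rule antisym)
    have "Sup Y \<le> r * real n"
    proof (rule cSup_least)
      obtain B where B: "is_allocation n M B" "is_cardinal n n C (\<lambda>_. k) B"
        using cardinal_approx[OF vi r0 r1 _ _ allocC, of "\<lambda>_. k"] cC r_def assms(3,5)
        by (auto simp: mult.commute)
      show "Y \<noteq> {}" unfolding Y_def using B by blast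
      fix x assume "x \<in> Y"
      then obtain A where A: "is_allocation n M A" "is_cardinal n n C (\<lambda>_. k) A" "x = usw n u A"
        unfolding Y_def by blast
      have "\<forall>i<n. util u i (A i) \<le> r"
      proof (intro allI impI)
        fix i assume i: "i < n"
        have fin: "finite (A i)" using A(1) i unfolding is_allocation_def M_def
          by (meson finite_lessThan finite_subset)
        have "card (A i \<inter> C i) \<le> k" using A(2) i unfolding is_cardinal_def by blast
        then show "util u i (A i) \<le> r" using su[OF fin] r_def assms(3)
          by (simp add: divide_right_mono)
      qed
      then have "usw n u A \<le> (\<Sum>i<n. r)" unfolding usw_def by (intro sum_mono) auto
      then show "x \<le> r * real n" using A(3) by (simp add: mult.commute)
    qed
    then show "max_cardinal_usw n n M C (\<lambda>_. k) u \<le> r * real n"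
      unfolding max_cardinal_usw_def Y_def by simp
    obtain B where B: "is_allocation n M B" "is_cardinal n n C (\<lambda>_. k) B" "r * usw n u C \<le> usw n u B"
      using cardinal_approx[OF vi r0 r1 _ _ allocC, of "\<lambda>_. k"] cC r_def assms(3,5)
      by (auto simp: mult.commute)
    have "usw n u B \<in> Y" unfolding Y_def using B by blast
    then have "usw n u B \<le> Sup Y" using bY by (rule cSup_upper)
    then show "r * real n \<le> max_cardinal_usw n n M C (\<lambda>_. k) u"
      unfolding max_cardinal_usw_def Y_def using B uswC by simp
  qed
  have "opt_usw n M u / max_cardinal_usw n n M C (\<lambda>_. k) u = real q / real k"
    using opt mc r_def assms(1-3) by simp
  then show ?thesis using vi cC by (intro exI[of _ M] exI[of _ C] exI[of _ u]) blast
qed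

theorem theorem4:
  shows "(\<forall>(n::nat) h (M::'g set) C u (k::nat \<Rightarrow> nat).
            valid_instance n h M C u \<and> 0 < h \<and>
            (\<forall>j<h. real (card (C j)) / real n \<le> real (k j)) \<and>
            (\<forall>j<h. \<forall>j'<h. j \<le> j' \<longrightarrow>
                real (k j) / real (card (C j)) \<le> real (k j') / real (card (C j'))) \<and>
            k 0 \<le> card (C 0)
          \<longrightarrow> opt_usw n M u / max_cardinal_usw n h M C k u
                \<le> real (card (C 0)) / real (k 0))
       \<and>
       (\<forall>(n::nat) (k::nat) (q::nat).
            0 < n \<and> 0 < k \<and> 0 < q \<and> k dvd q \<and> q \<le> k * n \<longrightarrow>
            (\<exists>(M::nat set) C u.
               valid_instance n n M C u \<and> (\<forall>j<n. card (C j) = q) \<and>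
               opt_usw n M u / max_cardinal_usw n n M C (\<lambda>_. k) u = real q / real k))"
  apply (intro conjI allI impI)
   apply (elim conjE)
   apply (rule part1; assumption)
  apply (elim conjE)
  apply (rule part2; assumption)
  done

end
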